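(* Let $\alpha,\delta>0$ and let $\{x_j:j\in\mathbb{N}\}$ be a complete interpolating sequence for $L^2(S_\delta)$, where $S_\delta=[-\delta,\delta]^2$. Then for every $f\in PW_{S_\delta}$ the Poisson interpolant satisfies $I_\alpha[f]\in L^2(\mathbb{R}^2)\cap C(\mathbb{R}^2)$.
   Context: Fourier transform on $\mathbb{R}^2$: $\hat g(\xi)=\mathcal{F}[g](\xi)=(2\pi)^{-1}\int g(x)e^{-i\langle\xi,x\rangle}dx$, extended to $L^2(\mathbb{R}^2)$. For $S\subset\mathbb{R}^2$ of positive measure, $PW_S=\{f\in L^2(\mathbb{R}^2):\hat f=0 \text{ a.e. outside } S\}$. A sequence $\{x_j:j\in\mathbb{N}\}\subset\mathbb{R}^2$ is a complete interpolating sequence for $S_\delta$ if $\{e^{i\langle\cdot,x_j\rangle}\}$ is a Riesz basis of $L^2(S_\delta)$. Poisson kernel: $g_\alpha(x)=(2\pi)^{-1}\alpha(\alpha^2+|x|^2)^{-3/2}$. For $f\in PW_{S_\delta}$ one has $\{f(x_j)\}\in\ell^2$, and there is a (unique) sequence $\{a_j\}\in\ell^2$ such that $I_\alpha[f](x)=\sum_{j=1}^\infty a_jg_\alpha(x-x_j)$ satisfies $I_\alpha[f](x_k)=f(x_k)$ for all $k\in\mathbb{N}$; $I_\alpha[f]$ is called the Poisson interpolant of $f$. *)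

theory Defs
  imports "HOL-Analysis.Analysis"
begin

definition sq_int :: "(real^2 \<Rightarrow> complex) \<Rightarrow> bool" where
  "sq_int f \<longleftrightarrow> f \<in> borel_measurable lborel \<and> integrable lborel (\<lambda>x. (cmod (f x))^2)"

definition sq_int_on :: "(real^2) set \<Rightarrow> (real^2 \<Rightarrow> complex) \<Rightarrow> bool" where
  "sq_int_on S g \<longleftrightarrow> set_borel_measurable lborel S g \<and> set_integrable lborel S (\<lambda>x. (cmod (g x))^2)"

definition L2_norm2_on :: "(real^2) set \<Rightarrow> (real^2 \<Rightarrow> complex) \<Rightarrow> real" where
  "L2_norm2_on S g = (LINT x:S|lborel. (cmod (g x))^2)"

definition fourier :: "(real^2 \<Rightarrow> complex) \<Rightarrow> real^2 \<Rightarrow> complex" where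
  "fourier g \<xi> = complex_of_real (1 / (2 * pi)) *
      (LINT x|lborel. g x * exp (- \<i> * complex_of_real (\<xi> \<bullet> x)))"

text \<open>Paley--Wiener space: f in L2 whose (L2 = distributional) Fourier transform F vanishes
  a.e. outside S; F is characterised by the duality identity
  int f * hat phi = int F * phi for all phi in L1 cap L2.\<close>
definition PW :: "(real^2) set \<Rightarrow> (real^2 \<Rightarrow> complex) set" where
  "PW S = {f. sq_int f \<and>
     (\<exists>F. sq_int F \<and> (AE \<xi> in lborel. \<xi> \<notin> S \<longrightarrow> F \<xi> = 0) \<and>
        (\<forall>\<phi>. \<phi> \<in> borel_measurable lborel \<and> integrable lborel \<phi> \<and> sq_int \<phi> \<longrightarrow>
           (LINT x|lborel. f x * fourier \<phi> x) = (LINT \<xi>|lborel. F \<xi> * \<phi> \<xi>)))}"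

definition riesz_basis_L2 :: "(real^2) set \<Rightarrow> (nat \<Rightarrow> real^2 \<Rightarrow> complex) \<Rightarrow> bool" where
  "riesz_basis_L2 S e \<longleftrightarrow>
     (\<forall>j. sq_int_on S (e j)) \<and>
     (\<exists>A B. 0 < A \<and> 0 < B \<and>
        (\<forall>(c :: nat \<Rightarrow> complex) n.
            A * (\<Sum>j<n. (cmod (c j))^2) \<le> L2_norm2_on S (\<lambda>\<xi>. \<Sum>j<n. c j * e j \<xi>) \<and>
            L2_norm2_on S (\<lambda>\<xi>. \<Sum>j<n. c j * e j \<xi>) \<le> B * (\<Sum>j<n. (cmod (c j))^2))) \<and>
     (\<forall>g. sq_int_on S g \<longrightarrow>
        (\<forall>\<epsilon>>0. \<exists>(c :: nat \<Rightarrow> complex) n.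
            L2_norm2_on S (\<lambda>\<xi>. g \<xi> - (\<Sum>j<n. c j * e j \<xi>)) < \<epsilon>))"

definition complete_interpolating :: "(real^2) set \<Rightarrow> (nat \<Rightarrow> real^2) \<Rightarrow> bool" where
  "complete_interpolating S xs \<longleftrightarrow>
     riesz_basis_L2 S (\<lambda>j \<xi>. exp (\<i> * complex_of_real (\<xi> \<bullet> xs j)))"

definition square :: "real \<Rightarrow> (real^2) set" where
  "square \<delta> = cbox (\<chi> i. - \<delta>) (\<chi> i. \<delta>)"

definition poisson :: "real \<Rightarrow> real^2 \<Rightarrow> real" where
  "poisson \<alpha> x = (1 / (2 * pi)) * \<alpha> * (\<alpha>^2 + (norm x)^2) powr (- 3 / 2)"

definition poisson_sum :: "real \<Rightarrow> (nat \<Rightarrow> real^2) \<Rightarrow> (nat \<Rightarrow> complex) \<Rightarrow> real^2 \<Rightarrow> complex" where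
  "poisson_sum \<alpha> xs a x = (\<Sum>j. a j * complex_of_real (poisson \<alpha> (x - xs j)))"

end

theory Submission
  imports Defs
begin

lemma poisson_pos: "\<alpha> > 0 \<Longrightarrow> poisson \<alpha> x > 0"
  unfolding poisson_def by (auto intro!: mult_pos_pos add_pos_nonneg)

lemma poisson_cont: "\<alpha> > 0 \<Longrightarrow> continuous_on UNIV (poisson \<alpha>)"
  unfolding poisson_def
  by (intro continuous_intros) (auto intro: add_pos_nonneg)

lemma poisson_minus: "poisson \<alpha> (- x) = poisson \<alpha> x"
  unfolding poisson_def by simp

lemma poisson_le0: assumes "\<alpha> > 0" shows "poisson \<alpha> x \<le> poisson \<alpha> 0"
proof -
  have "(\<alpha>^2 + (norm x)^2) powr (- 3 / 2) \<le> (\<alpha>^2 + (norm (0::real^2))^2) powr (- 3 / 2)"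
    using assms by (intro powr_mono2') auto
  then show ?thesis unfolding poisson_def using assms
    by (simp add: divide_right_mono mult_left_mono)
qed

lemma poisson_decay: assumes "\<alpha> > 0" "norm x > 0"
  shows "poisson \<alpha> x \<le> \<alpha> / (2*pi) * norm x powr (-3)"
proof -
  have "(\<alpha>^2 + (norm x)^2) powr (- 3 / 2) \<le> ((norm x)^2) powr (- 3 / 2)"
    using assms by (intro powr_mono2') auto
  also have "((norm x)^2) powr (- 3 / 2) = norm x powr (-3)"
    using assms by (simp add: powr_powr flip: powr_numeral)
  finally show ?thesis unfolding poisson_def using assms
    by (simp add: divide_right_mono mult_left_mono)
qed

lemma poisson_harnack:
  assumes "\<alpha> > 0" "norm (y - z) \<le> r"
  shows "poisson \<alpha> y \<le> (2 + 2*r^2/\<alpha>^2) powr (3/2) * poisson \<alpha> z"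
proof -
  define u where "u = \<alpha>^2 + (norm y)^2"
  define v where "v = \<alpha>^2 + (norm z)^2"
  define k where "k = 2 + 2*r^2/\<alpha>^2"
  have u: "u > 0" and v: "v > 0" using assms by (auto simp: u_def v_def intro: add_pos_nonneg)
  have r: "r \<ge> 0" using assms(2) norm_ge_zero order_trans by blast
  have "norm z \<le> norm y + r" using assms(2) norm_triangle_sub[of z y]
    by (metis add_le_cancel_left norm_minus_commute order_trans)
  hence "(norm z)^2 \<le> (norm y + r)^2" by (intro power_mono) auto
  also have "\<dots> \<le> 2*(norm y)^2 + 2*r^2"
    using sum_squares_ge_zero[of "norm y - r" 0] by (simp add: power2_eq_square algebra_simps)
  finally have zz: "(norm z)^2 \<le> 2*(norm y)^2 + 2*r^2" .
  have "v \<le> k * u"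
  proof -
    have "k * u = 2*\<alpha>^2 + 2*(norm y)^2 + 2*r^2 + 2*r^2*(norm y)^2/\<alpha>^2"
      using assms(1) by (simp add: k_def u_def field_simps)
    moreover have "2*r^2*(norm y)^2/\<alpha>^2 \<ge> 0" by simp
    moreover have "\<alpha>^2 \<ge> 0" by simp
    ultimately show ?thesis using zz unfolding v_def by linarith
  qed
  hence "1/u \<le> k * (1/v)" using u v by (simp add: field_simps)
  hence "(1/u) powr (3/2) \<le> (k * (1/v)) powr (3/2)" using u by (intro powr_mono2) auto
  also have "\<dots> = k powr (3/2) * (1/v) powr (3/2)"
    using v by (subst powr_mult) (auto simp: k_def)
  finally have *: "u powr (-3/2) \<le> k powr (3/2) * v powr (-3/2)"
    using u v by (simp add: powr_minus_divide powr_divide)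
  show ?thesis unfolding poisson_def
    using mult_left_mono[OF *, of "1/(2*pi)*\<alpha>"] assms(1)
    by (simp add: u_def v_def k_def mult_ac)
qed

lemma One_Basis[simp]: "i \<in> Basis \<Longrightarrow> (One::'a::euclidean_space) \<bullet> i = 1"
  by (simp add: inner_sum_left sum.If_cases inner_Basis)

lemma aux_One: "b \<in> Basis \<Longrightarrow> ((c::real) *\<^sub>R (One::'a::euclidean_space) - (- c) *\<^sub>R One) \<bullet> b = 2 * c"
proof -
  assume b: "b \<in> Basis"
  have "((c::real) *\<^sub>R (One::'a) - (- c) *\<^sub>R One) \<bullet> b = c * (One \<bullet> b) - (-c) * (One \<bullet> b)"
    by (simp only: inner_diff_left inner_scaleR_left)
  also have "\<dots> = 2 * c" using b by simp
  finally show ?thesis .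
qed

definition bx :: "nat \<Rightarrow> (real^2) set" where
  "bx k = cbox (- ((2::real)^k) *\<^sub>R One) (((2::real)^k) *\<^sub>R One)"

lemma measure_bx: "measure lborel (bx k) = 4 * 4^k"
proof -
  have "measure lborel (bx k) = (\<Prod>b\<in>(Basis::(real^2) set). ((2::real)^k *\<^sub>R One - (- ((2::real)^k) *\<^sub>R One)) \<bullet> b)"
    unfolding bx_def by (rule measure_lborel_cbox) (simp add: inner_scaleR_left)
  also have "\<dots> = (\<Prod>b\<in>(Basis::(real^2) set). 2 * 2^k)"
    by (intro prod.cong refl) (rule aux_One)
  also have "\<dots> = 4 * 4^k"
  proof -
    have "(4::real)^k = (2^2)^k" by simp
    also have "\<dots> = (2^k)^2" by (simp only: power_mult[symmetric] mult.commute)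
    finally have "(4::real)^k = (2^k)^2" .
    thus ?thesis by (simp add: power_mult_distrib)
  qed
  finally show ?thesis .
qed

lemma mem_bx: "norm x \<le> 2^k \<Longrightarrow> x \<in> bx k"
  unfolding bx_def mem_box
proof (intro ballI conjI)
  fix i :: "real^2" assume "norm x \<le> 2^k" "i \<in> Basis"
  then have "\<bar>x \<bullet> i\<bar> \<le> 2^k" using Basis_le_norm[of i x] by linarith
  then show "(- ((2::real)^k) *\<^sub>R One) \<bullet> i \<le> x \<bullet> i" "x \<bullet> i \<le> ((2::real)^k *\<^sub>R One) \<bullet> i"
    using \<open>i \<in> Basis\<close> by auto
qed

lemma bx_finite: "emeasure lborel (bx k) < \<infinity>"
  unfolding bx_def by (rule emeasure_compact_finite) simp

lemma poisson_integrable: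
  assumes "\<alpha> > 0"
  shows "integrable lborel (poisson \<alpha>)"
proof -
  define f where "f = (\<lambda>k x. (1/8::real)^k * indicator (bx k) x)"
  have fi: "integrable lborel (f k)" for k
    unfolding f_def using bx_finite[of k]
    by (intro integrable_mult_right integrable_real_indicator) (auto simp: bx_def)
  have fs: "summable (\<lambda>k. norm (f k x))" for x
    by (rule summable_comparison_test[OF _ summable_geometric[of "1/8::real"]])
       (auto simp: f_def indicator_def)
  have "summable (\<lambda>k. 4 * (1/2::real)^k)"
    by (intro summable_mult summable_geometric) auto
  moreover have "(LINT x|lborel. norm (f k x)) = 4 * (1/2::real)^k" for k
  proof -
    have "(LINT x|lborel. norm (f k x)) = (LINT x|lborel. f k x)"
      by (rule Bochner_Integration.integral_cong) (auto simp: f_def)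
    also have "\<dots> = (1/8)^k * measure lborel (bx k)"
      unfolding f_def using bx_finite[of k]
      by (subst integral_mult_right_zero) (auto simp: bx_def)
    also have "\<dots> = 4 * (1/2::real)^k"
    proof -
      have "(8::real)^k = 4^k*2^k" by (simp flip: power_mult_distrib)
      thus ?thesis by (simp add: measure_bx power_divide)
    qed
    finally show ?thesis .
  qed
  ultimately have "summable (\<lambda>k. LINT x|lborel. norm (f k x))" by simp
  hence Hi: "integrable lborel (\<lambda>x. \<Sum>k. f k x)"
    using fi fs by (intro integrable_suminf) auto
  define C where "C = max (poisson \<alpha> 0) (8 * \<alpha> / (2*pi))"
  have bound: "poisson \<alpha> x \<le> C * (\<Sum>k. f k x)" for x
  proof -
    have fsum: "summable (\<lambda>k. f k x)" using fs[of x] by (simp add: f_def)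
    have ge: "f m x \<le> (\<Sum>k. f k x)" for m
    proof -
      have "sum (\<lambda>k. f k x) {m} \<le> (\<Sum>k. f k x)"
        by (rule sum_le_suminf[OF fsum]) (auto simp: f_def)
      thus ?thesis by simp
    qed
    show ?thesis
    proof (cases "norm x \<le> 1")
      case True
      hence "x \<in> bx 0" by (intro mem_bx) auto
      hence "1 \<le> (\<Sum>k. f k x)" using ge[of 0] by (simp add: f_def)
      moreover have "poisson \<alpha> x \<le> C" using poisson_le0[OF assms, of x] by (simp add: C_def)
      moreover have "C \<ge> 0" using poisson_pos[OF assms, of 0] by (simp add: C_def)
      ultimately show ?thesis by (metis mult_left_mono mult.right_neutral order_trans)
    next
      case False
      obtain n where n: "norm x < 2^n" using real_arch_pow[of 2 "norm x"] by auto
      define m where "m = (LEAST k. norm x \<le> 2^k)"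
      have m1: "norm x \<le> 2^m" unfolding m_def by (rule LeastI[of _ n]) (use n in auto)
      have m0: "m \<noteq> 0" using False m1 by (cases m) auto
      have m2: "\<not> norm x \<le> 2^(m-1)"
      proof
        assume "norm x \<le> 2^(m-1)"
        hence "m \<le> m - 1" unfolding m_def by (rule Least_le)
        thus False using m0 by simp
      qed
      have A: "poisson \<alpha> x \<le> \<alpha> / (2*pi) * norm x powr (-3)"
        using False assms by (intro poisson_decay) auto
      have B1: "norm x powr (-3) \<le> ((2::real)^(m-1)) powr (-3)"
        using m2 by (intro powr_mono2') auto
      have B2: "((2::real)^(m-1)) powr (-3) = 8 * (1/8)^m"
      proof -
        have e1: "((2::real)^(m-1)) powr (-3) = 1 / ((2::real)^(m-1))^3"
          by (simp add: powr_minus_divide powr_realpow flip: powr_numeral)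
        have e2: "((2::real)^(m-1))^3 = 8^(m-1)" by (simp flip: power_mult add: power_mult mult.commute[of _ 3])
        have e3: "(8::real)^m = 8 * 8^(m-1)" using m0 by (cases m) auto
        have "1 / (8::real)^(m-1) = 8 * (1/8)^m" using e3 by (simp add: power_divide)
        thus ?thesis using e1 e2 by simp
      qed
      have "poisson \<alpha> x \<le> \<alpha> / (2*pi) * (8 * (1/8)^m)"
        using A mult_left_mono[OF B1, of "\<alpha> / (2*pi)"] assms B2 by simp
      also have "\<dots> = 8 * \<alpha> / (2*pi) * f m x"
        using mem_bx[OF m1] by (simp add: f_def)
      also have "\<dots> \<le> C * f m x" by (rule mult_right_mono) (auto simp: C_def f_def)
      also have "\<dots> \<le> C * (\<Sum>k. f k x)"
        using ge[of m] poisson_pos[OF assms, of 0] by (intro mult_left_mono) (auto simp: C_def)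
      finally show ?thesis .
    qed
  qed
  show ?thesis
  proof (rule Bochner_Integration.integrable_bound[OF integrable_mult_right[OF Hi, of C]])
    show "poisson \<alpha> \<in> borel_measurable lborel"
      using poisson_cont[OF assms] by (simp add: borel_measurable_continuous_onI)
    show "AE x in lborel. norm (poisson \<alpha> x) \<le> norm (C * (\<Sum>k. f k x))"
      using bound poisson_pos[OF assms] by (auto intro!: AE_I2 order_trans[OF _ abs_ge_self] simp: abs_of_pos)
  qed
qed

lemma exp_i_diff: "cmod (exp (\<i> * complex_of_real a) - exp (\<i> * complex_of_real b)) \<le> \<bar>a - b\<bar>"
proof -
  have "exp (\<i> * complex_of_real a) - exp (\<i> * complex_of_real b)
        = exp (\<i> * complex_of_real b) * (exp (\<i> * complex_of_real (a - b)) - 1)"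
    by (simp add: algebra_simps flip: exp_add)
  hence "cmod (exp (\<i> * complex_of_real a) - exp (\<i> * complex_of_real b))
        = cmod (exp (\<i> * complex_of_real (a - b)) - 1)"
    by (simp add: norm_mult)
  also have "\<dots> = 2 * \<bar>sin ((a - b) / 2)\<bar>" by (rule dist_exp_i_1)
  also have "\<dots> \<le> 2 * \<bar>(a - b) / 2\<bar>" using abs_sin_x_le_abs_x[of "(a - b) / 2"] by linarith
  finally show ?thesis by simp
qed

lemma separation:
  assumes "complete_interpolating (square \<delta>) xs"
  shows "\<exists>\<eta>>0. \<forall>j k. j \<noteq> k \<longrightarrow> \<eta> \<le> norm (xs j - xs k)"
proof -
  define S where "S = square \<delta>"
  define e where "e = (\<lambda>j \<xi>. exp (\<i> * complex_of_real (\<xi> \<bullet> xs j)))"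
  from assms obtain A where A: "A > 0" and low: "\<And>(c::nat \<Rightarrow> complex) n.
      A * (\<Sum>j<n. (cmod (c j))^2) \<le> L2_norm2_on S (\<lambda>\<xi>. \<Sum>j<n. c j * e j \<xi>)"
    unfolding complete_interpolating_def riesz_basis_L2_def S_def e_def by blast
  have cS: "compact S" unfolding S_def square_def by simp
  then obtain D where D: "\<And>\<xi>. \<xi> \<in> S \<Longrightarrow> norm \<xi> \<le> D"
    using compact_imp_bounded bounded_iff by metis
  define \<mu> where "\<mu> = measure lborel S"
  define K where "K = D^2 * \<mu>"
  have K0: "K \<ge> 0" unfolding K_def \<mu>_def by simp
  define \<eta> where "\<eta> = sqrt (2 * A / (K + 1))"
  have "\<eta> > 0" unfolding \<eta>_def using A K0 by simp
  moreover have "\<eta> \<le> norm (xs j - xs k)" if jk: "j \<noteq> k" for j k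
  proof -
    define c where "c = (\<lambda>i. (if i = j then 1 else 0) - (if i = k then 1 else (0::complex)))"
    define n where "n = Suc (max j k)"
    have jn: "j \<in> {..<n}" and kn: "k \<in> {..<n}" unfolding n_def by auto
    have s1: "(\<Sum>i<n. (cmod (c i))^2) = 2"
    proof -
      have "(\<Sum>i<n. (cmod (c i))^2) = (\<Sum>i<n. (if i = j then 1 else 0) + (if i = k then 1 else (0::real)))"
        by (rule sum.cong) (auto simp: c_def jk)
      also have "\<dots> = 2" using jn kn by (simp add: sum.distrib)
      finally show ?thesis .
    qed
    have s2: "(\<lambda>\<xi>. \<Sum>i<n. c i * e i \<xi>) = (\<lambda>\<xi>. e j \<xi> - e k \<xi>)"
    proof
      fix \<xi>
      have "(\<Sum>i<n. c i * e i \<xi>) = (\<Sum>i<n. (if i = j then e j \<xi> else 0) - (if i = k then e k \<xi> else 0))"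
        by (rule sum.cong) (auto simp: c_def)
      also have "\<dots> = e j \<xi> - e k \<xi>" using jn kn by (simp add: sum_subtractf)
      finally show "(\<Sum>i<n. c i * e i \<xi>) = e j \<xi> - e k \<xi>" .
    qed
    define d where "d = norm (xs j - xs k)"
    have pt: "(cmod (e j \<xi> - e k \<xi>))^2 \<le> D^2 * d^2" if "\<xi> \<in> S" for \<xi>
    proof -
      have "cmod (e j \<xi> - e k \<xi>) \<le> \<bar>\<xi> \<bullet> xs j - \<xi> \<bullet> xs k\<bar>"
        unfolding e_def by (rule exp_i_diff)
      also have "\<dots> = \<bar>\<xi> \<bullet> (xs j - xs k)\<bar>" by (simp add: inner_diff_right)
      also have "\<dots> \<le> norm \<xi> * d" unfolding d_def by (rule Cauchy_Schwarz_ineq2)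
      also have "\<dots> \<le> D * d" using D[OF that] by (simp add: d_def mult_right_mono)
      finally have "cmod (e j \<xi> - e k \<xi>) \<le> D * d" .
      hence "(cmod (e j \<xi> - e k \<xi>))^2 \<le> (D * d)^2" by (intro power_mono) auto
      thus ?thesis by (simp add: power_mult_distrib)
    qed
    have cont: "continuous_on S (\<lambda>\<xi>. (cmod (e j \<xi> - e k \<xi>))^2)"
      unfolding e_def by (intro continuous_intros)
    have "2 * A \<le> L2_norm2_on S (\<lambda>\<xi>. e j \<xi> - e k \<xi>)"
      using low[of c n] s1 s2 by (simp add: mult.commute)
    also have "\<dots> = (LINT \<xi>|lborel. indicator S \<xi> *\<^sub>R (cmod (e j \<xi> - e k \<xi>))^2)"
      unfolding L2_norm2_on_def set_lebesgue_integral_def ..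
    also have "\<dots> \<le> (LINT \<xi>|lborel. indicator S \<xi> * (D^2 * d^2))"
    proof (rule integral_mono)
      show "integrable lborel (\<lambda>\<xi>. indicator S \<xi> *\<^sub>R (cmod (e j \<xi> - e k \<xi>))^2)"
        by (rule borel_integrable_compact[OF cS cont])
      show "integrable lborel (\<lambda>\<xi>. indicator S \<xi> * (D^2 * d^2))"
        using emeasure_compact_finite[OF cS] cS
        by (intro integrable_mult_left integrable_real_indicator) (auto intro: borel_compact)
      show "indicator S \<xi> *\<^sub>R (cmod (e j \<xi> - e k \<xi>))^2 \<le> indicator S \<xi> * (D^2 * d^2)" for \<xi>
        using pt[of \<xi>] by (auto simp: indicator_def)
    qed
    also have "\<dots> = \<mu> * (D^2 * d^2)"
      unfolding \<mu>_def using emeasure_compact_finite[OF cS] cS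
      by (subst integral_mult_left_zero) simp
    also have "\<dots> = K * d^2" by (simp add: K_def)
    also have "\<dots> \<le> (K + 1) * d^2" by (simp add: mult_right_mono)
    finally have "2 * A / (K + 1) \<le> d^2" using K0 by (simp add: field_simps)
    hence "\<eta> \<le> sqrt (d^2)" unfolding \<eta>_def by (rule real_sqrt_le_mono)
    thus ?thesis by (simp add: d_def)
  qed
  ultimately show ?thesis by blast
qed

lemma shift_integrable:
  fixes f :: "real^2 \<Rightarrow> real"
  assumes "integrable lborel f" "f \<in> borel_measurable borel"
  shows "integrable lborel (\<lambda>z. f (c + z))" "(LINT z|lborel. f (c + z)) = (LINT z|lborel. f z)"
proof -
  have m: "(+) c \<in> measurable lborel borel" by simp
  show "integrable lborel (\<lambda>z. f (c + z))"
    using assms integrable_distr_eq[OF m assms(2)] by (simp add: lborel_distr_plus)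
  show "(LINT z|lborel. f (c + z)) = (LINT z|lborel. f z)"
    using integral_distr[OF m assms(2)] by (simp add: lborel_distr_plus)
qed

lemma poisson_meas: "\<alpha> > 0 \<Longrightarrow> poisson \<alpha> \<in> borel_measurable borel"
  using poisson_cont by (simp add: borel_measurable_continuous_onI)

lemma poisson_shift:
  assumes "\<alpha> > 0"
  shows "integrable lborel (\<lambda>z. poisson \<alpha> (x - z))"
    "(LINT z|lborel. poisson \<alpha> (x - z)) = (LINT z|lborel. poisson \<alpha> z)"
proof -
  have e: "(\<lambda>z. poisson \<alpha> (x - z)) = (\<lambda>z. poisson \<alpha> (- x + z))"
    by (metis minus_diff_eq poisson_minus uminus_add_conv_diff)
  show "integrable lborel (\<lambda>z. poisson \<alpha> (x - z))"
    unfolding e by (rule shift_integrable(1)[OF poisson_integrable[OF assms] poisson_meas[OF assms]])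
  show "(LINT z|lborel. poisson \<alpha> (x - z)) = (LINT z|lborel. poisson \<alpha> z)"
    unfolding e by (rule shift_integrable(2)[OF poisson_integrable[OF assms] poisson_meas[OF assms]])
qed

lemma poisson_shift2:
  assumes "\<alpha> > 0"
  shows "integrable lborel (\<lambda>z. poisson \<alpha> (z - y))"
    "(LINT z|lborel. poisson \<alpha> (z - y)) = (LINT z|lborel. poisson \<alpha> z)"
proof -
  have e: "(\<lambda>z. poisson \<alpha> (z - y)) = (\<lambda>z. poisson \<alpha> (- y + z))" by simp
  show "integrable lborel (\<lambda>z. poisson \<alpha> (z - y))"
    unfolding e by (rule shift_integrable(1)[OF poisson_integrable[OF assms] poisson_meas[OF assms]])
  show "(LINT z|lborel. poisson \<alpha> (z - y)) = (LINT z|lborel. poisson \<alpha> z)"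
    unfolding e by (rule shift_integrable(2)[OF poisson_integrable[OF assms] poisson_meas[OF assms]])
qed

lemma sum_bound:
  fixes xs :: "nat \<Rightarrow> real^2"
  assumes a: "\<alpha> > 0" and eta: "\<eta> > 0"
    and sep: "\<forall>j k. j \<noteq> k \<longrightarrow> \<eta> \<le> norm (xs j - xs k)"
  shows "\<exists>M. \<forall>x n. (\<Sum>j<n. poisson \<alpha> (x - xs j)) \<le> M"
proof -
  define r where "r = \<eta> / 2"
  have r: "r > 0" using eta by (simp add: r_def)
  define K where "K = (2 + 2*r^2/\<alpha>^2) powr (3/2)"
  define V where "V = measure lborel (ball (0::real^2) r)"
  have V: "V > 0" unfolding V_def using content_ball_pos[OF r] by simp
  have VB: "measure lborel (ball (xs j) r) = V" for j
    unfolding V_def using content_ball_conv_unit_ball[of r "xs j"] content_ball_conv_unit_ball[of r "0::real^2"] r by simp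
  define Ip where "Ip = (LINT z|lborel. poisson \<alpha> z)"
  have K0: "K \<ge> 0" unfolding K_def by simp
  have disj: "(\<Sum>j<n. indicator (ball (xs j) r) z) \<le> (1::real)" for n z
  proof -
    have "card {j\<in>{..<n}. z \<in> ball (xs j) r} \<le> Suc 0"
    proof (rule card_le_Suc0_iff_eq[THEN iffD2])
      show "\<forall>j\<in>{j\<in>{..<n}. z \<in> ball (xs j) r}. \<forall>k\<in>{j\<in>{..<n}. z \<in> ball (xs j) r}. j = k"
      proof (intro ballI, rule ccontr)
        fix j k assume "j \<in> {j\<in>{..<n}. z \<in> ball (xs j) r}" "k \<in> {j\<in>{..<n}. z \<in> ball (xs j) r}" "j \<noteq> k"
        hence "dist (xs j) z < r" "dist (xs k) z < r" "\<eta> \<le> norm (xs j - xs k)" using sep by auto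
        moreover have "norm (xs j - xs k) \<le> dist (xs j) z + dist (xs k) z"
          by (metis dist_commute dist_norm dist_triangle)
        ultimately show False unfolding r_def by linarith
      qed
    qed (rule finite_subset[of _ "{..<n::nat}"], auto)
    moreover have "(\<Sum>j<n. indicator (ball (xs j) r) z) = real (card {j\<in>{..<n}. z \<in> ball (xs j) r})"
    proof -
      have "{..<n} \<inter> {j. z \<in> ball (xs j) r} = {j\<in>{..<n}. z \<in> ball (xs j) r}" by auto
      thus ?thesis by (simp add: indicator_def sum.If_cases del: mem_ball)
    qed
    ultimately show ?thesis by simp
  qed
  have "(\<Sum>j<n. poisson \<alpha> (x - xs j)) \<le> K * Ip / V" for x n
  proof -
    have ib: "integrable lborel (\<lambda>z. indicator (ball (xs j) r) z * c)" for j and c :: real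
      using emeasure_lborel_ball_finite[of "xs j" r]
      by (intro integrable_mult_left integrable_real_indicator) auto
    have ip: "integrable lborel (\<lambda>z. indicator (ball (xs j) r) z * (K * poisson \<alpha> (x - z)))" for j
      using integrable_real_mult_indicator[of "ball (xs j) r" lborel "\<lambda>z. K * poisson \<alpha> (x - z)"]
        poisson_shift(1)[OF a, of x]
      by (simp add: mult.commute)
    have "(\<Sum>j<n. poisson \<alpha> (x - xs j)) * V = (\<Sum>j<n. LINT z|lborel. indicator (ball (xs j) r) z * poisson \<alpha> (x - xs j))"
      by (simp add: sum_distrib_left VB mult.commute)
    also have "\<dots> \<le> (\<Sum>j<n. LINT z|lborel. indicator (ball (xs j) r) z * (K * poisson \<alpha> (x - z)))"
    proof (rule sum_mono, rule integral_mono[OF ib ip])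
      fix j z
      show "indicator (ball (xs j) r) z * poisson \<alpha> (x - xs j) \<le> indicator (ball (xs j) r) z * (K * poisson \<alpha> (x - z))"
      proof (cases "z \<in> ball (xs j) r")
        case True
        hence "norm ((x - xs j) - (x - z)) \<le> r" by (simp add: dist_norm norm_minus_commute)
        from poisson_harnack[OF a this] show ?thesis using True by (simp add: K_def)
      qed simp
    qed
    also have "\<dots> = (LINT z|lborel. (\<Sum>j<n. indicator (ball (xs j) r) z) * (K * poisson \<alpha> (x - z)))"
      by (simp only: sum_distrib_right Bochner_Integration.integral_sum[OF ip])
    also have "\<dots> \<le> (LINT z|lborel. K * poisson \<alpha> (x - z))"
    proof (rule integral_mono)
      show "integrable lborel (\<lambda>z. (\<Sum>j<n. indicator (ball (xs j) r) z) * (K * poisson \<alpha> (x - z)))"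
        unfolding sum_distrib_right by (intro Bochner_Integration.integrable_sum ip)
      show "integrable lborel (\<lambda>z. K * poisson \<alpha> (x - z))"
        using poisson_shift(1)[OF a, of x] by simp
      show "(\<Sum>j<n. indicator (ball (xs j) r) z) * (K * poisson \<alpha> (x - z)) \<le> K * poisson \<alpha> (x - z)" for z
        using disj[where n=n and z=z] K0 poisson_pos[OF a, of "x - z"]
        by (intro mult_left_le_one_le) (auto intro: sum_nonneg)
    qed
    also have "\<dots> = K * Ip" using poisson_shift(2)[OF a, of x] by (simp add: Ip_def)
    finally show ?thesis using V by (simp add: field_simps)
  qed
  thus ?thesis by blast
qed

lemma cs_gen:
  fixes b :: "nat \<Rightarrow> complex" and h :: "nat \<Rightarrow> real"
  assumes h0: "\<And>i. h i \<ge> 0" and hM: "(\<Sum>i<n. h i) \<le> M"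
  shows "(cmod (\<Sum>i<n. b i * complex_of_real (h i)))^2 \<le> (\<Sum>i<n. (cmod (b i))^2 * h i) * M"
proof -
  have "cmod (\<Sum>i<n. b i * complex_of_real (h i)) \<le> (\<Sum>i<n. cmod (b i) * h i)"
    using norm_sum[of "\<lambda>i. b i * complex_of_real (h i)" "{..<n}"] h0
    by (simp add: norm_mult)
  also have "\<dots> = (\<Sum>i<n. (cmod (b i) * sqrt (h i)) * sqrt (h i))"
    using h0 by (intro sum.cong refl) (simp add: mult.assoc)
  finally have le: "cmod (\<Sum>i<n. b i * complex_of_real (h i)) \<le> (\<Sum>i<n. (cmod (b i) * sqrt (h i)) * sqrt (h i))" .
  have "(cmod (\<Sum>i<n. b i * complex_of_real (h i)))^2 \<le> (\<Sum>i<n. (cmod (b i) * sqrt (h i)) * sqrt (h i))^2"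
    using le by (intro power_mono) auto
  also have "\<dots> \<le> (\<Sum>i<n. (cmod (b i) * sqrt (h i))^2) * (\<Sum>i<n. (sqrt (h i))^2)"
    by (rule Cauchy_Schwarz_ineq_sum)
  also have "\<dots> = (\<Sum>i<n. (cmod (b i))^2 * h i) * (\<Sum>i<n. h i)"
    using h0 by (simp add: power_mult_distrib)
  also have "\<dots> \<le> (\<Sum>i<n. (cmod (b i))^2 * h i) * M"
    using hM h0 by (intro mult_left_mono sum_nonneg) auto
  finally show ?thesis .
qed

theorem proposition2:
  fixes \<alpha> \<delta> :: real and xs :: "nat \<Rightarrow> real^2" and f :: "real^2 \<Rightarrow> complex"
    and a :: "nat \<Rightarrow> complex"
  assumes "\<alpha> > 0" and "\<delta> > 0"
    and "complete_interpolating (square \<delta>) xs"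
    and "f \<in> PW (square \<delta>)" and "continuous_on UNIV f"
    and "summable (\<lambda>j. (cmod (a j))^2)"
    and "\<forall>k. poisson_sum \<alpha> xs a (xs k) = f (xs k)"
  shows "sq_int (poisson_sum \<alpha> xs a) \<and> continuous_on UNIV (poisson_sum \<alpha> xs a)"
proof -
  note al = assms(1) and asum = assms(6)
  obtain \<eta> where eta: "\<eta> > 0" and sep: "\<forall>j k. j \<noteq> k \<longrightarrow> \<eta> \<le> norm (xs j - xs k)"
    using separation[OF assms(3)] by blast
  obtain M where M: "\<And>x n. (\<Sum>j<n. poisson \<alpha> (x - xs j)) \<le> M"
    using sum_bound[OF al eta sep] by blast
  define g where "g = (\<lambda>j x. poisson \<alpha> (x - xs j))"
  define G0 where "G0 = poisson \<alpha> 0"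
  have g0: "0 < g j x" "g j x \<le> G0" for j x
    unfolding g_def G0_def using poisson_pos[OF al] poisson_le0[OF al] by auto
  have gM: "(\<Sum>i<n. g (i + k) x) \<le> M" for n k x
  proof -
    have "(\<Sum>i<n. g (i + k) x) = sum (\<lambda>j. g j x) {0+k..<n+k}"
      using sum.shift_bounds_nat_ivl[of "\<lambda>j. g j x" 0 k n] by (simp add: atLeast0LessThan)
    also have "\<dots> \<le> sum (\<lambda>j. g j x) {..<n+k}"
      using g0 by (intro sum_mono2) (auto intro: less_imp_le)
    also have "\<dots> \<le> M" using M by (simp add: g_def)
    finally show ?thesis .
  qed
  define T where "T = (\<lambda>k. \<Sum>i. (cmod (a (i + k)))^2)"
  have Tlim: "T \<longlonglongrightarrow> 0"
  proof -
    have "T = (\<lambda>k. (\<Sum>i. (cmod (a i))^2) - (\<Sum>i<k. (cmod (a i))^2))"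
      unfolding T_def using asum by (intro ext suminf_minus_initial_segment)
    moreover have "(\<lambda>k. (\<Sum>i. (cmod (a i))^2) - (\<Sum>i<k. (cmod (a i))^2)) \<longlonglongrightarrow> (\<Sum>i. (cmod (a i))^2) - (\<Sum>i. (cmod (a i))^2)"
      using asum by (intro tendsto_diff tendsto_const summable_LIMSEQ)
    ultimately show ?thesis by simp
  qed
  have sa: "summable (\<lambda>i. (cmod (a (i + k)))^2)" for k
    using summable_iff_shift[of "\<lambda>j. (cmod (a j))^2" k] asum by simp
  have Psum: "summable (\<lambda>i. (cmod (a (i + k)))^2 * g (i + k) x)" for k x
  proof (rule summable_comparison_test[of _ "\<lambda>i. (cmod (a (i + k)))^2 * G0"])
    show "summable (\<lambda>i. (cmod (a (i + k)))^2 * G0)" using sa[of k] by (rule summable_mult2)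
    show "\<exists>N. \<forall>n\<ge>N. norm ((cmod (a (n + k)))^2 * g (n + k) x) \<le> (cmod (a (n + k)))^2 * G0"
      using g0 by (auto intro!: mult_left_mono simp: abs_of_pos abs_mult)
  qed
  have PT: "(\<Sum>i. (cmod (a (i + k)))^2 * g (i + k) x) \<le> G0 * T k" for k x
  proof -
    have "(\<Sum>i. (cmod (a (i + k)))^2 * g (i + k) x) \<le> (\<Sum>i. (cmod (a (i + k)))^2 * G0)"
      using Psum sa g0 by (intro suminf_le) (auto intro!: summable_mult2 mult_left_mono)
    also have "\<dots> = G0 * T k" unfolding T_def using suminf_mult2[OF sa[of k], of G0] by (simp add: mult.commute)
    finally show ?thesis .
  qed
  have Fsum: "summable (\<lambda>i. a (i + k) * complex_of_real (g (i + k) x))" for k x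
  proof (rule summable_norm_cancel, rule summable_comparison_test)
    show "summable (\<lambda>i. (cmod (a (i + k)))^2 * G0 + g (i + k) x)"
    proof (rule summable_add)
      show "summable (\<lambda>i. (cmod (a (i + k)))^2 * G0)" using sa[of k] by (rule summable_mult2)
      show "summable (\<lambda>i. g (i + k) x)"
        by (rule summableI_nonneg_bounded[of _ M]) (use g0 gM in \<open>auto intro: less_imp_le\<close>)
    qed
    show "\<exists>N. \<forall>n\<ge>N. norm (norm (a (n + k) * complex_of_real (g (n + k) x))) \<le> (cmod (a (n + k)))^2 * G0 + g (n + k) x"
    proof (intro exI allI impI)
      fix n
      have gp: "0 < g (n+k) x" "g (n+k) x \<le> G0" using g0 by auto
      have nn: "(cmod (a (n+k)))^2 * G0 \<ge> 0" using gp by simp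
      have en: "norm (norm (a (n + k) * complex_of_real (g (n + k) x))) = cmod (a (n+k)) * g (n+k) x"
        using gp by (simp add: norm_mult abs_of_pos)
      show "norm (norm (a (n + k) * complex_of_real (g (n + k) x))) \<le> (cmod (a (n + k)))^2 * G0 + g (n + k) x"
      proof (cases "cmod (a (n + k)) \<le> 1")
        case True
        hence "cmod (a (n+k)) * g (n+k) x \<le> 1 * g (n+k) x" using gp by (intro mult_right_mono) auto
        thus ?thesis using nn unfolding en by linarith
      next
        case False
        hence "cmod (a (n+k)) * g (n+k) x \<le> (cmod (a (n+k)))^2 * G0"
        proof (intro mult_mono)
          show "cmod (a (n+k)) \<le> (cmod (a (n+k)))^2"
            using False mult_right_mono[of 1 "cmod (a (n+k))" "cmod (a (n+k))"]
            by (simp add: power2_eq_square)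
        qed (use gp in auto)
        thus ?thesis using gp unfolding en by linarith
      qed
    qed
  qed
  have tailCS: "(cmod (\<Sum>i. a (i + k) * complex_of_real (g (i + k) x)))^2 \<le> (\<Sum>i. (cmod (a (i + k)))^2 * g (i + k) x) * M" for k x
  proof (rule LIMSEQ_le_const2)
    show "(\<lambda>n. (cmod (\<Sum>i<n. a (i + k) * complex_of_real (g (i + k) x)))^2) \<longlonglongrightarrow> (cmod (\<Sum>i. a (i + k) * complex_of_real (g (i + k) x)))^2"
      by (intro tendsto_power tendsto_norm summable_LIMSEQ Fsum)
    show "\<exists>N. \<forall>n\<ge>N. (cmod (\<Sum>i<n. a (i + k) * complex_of_real (g (i + k) x)))^2 \<le> (\<Sum>i. (cmod (a (i + k)))^2 * g (i + k) x) * M"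
    proof (intro exI allI impI)
      fix n
      have M0: "M \<ge> 0" using M[of x 0] by simp
      have "(cmod (\<Sum>i<n. a (i + k) * complex_of_real (g (i + k) x)))^2 \<le> (\<Sum>i<n. (cmod (a (i + k)))^2 * g (i + k) x) * M"
        by (rule cs_gen) (use g0 gM in \<open>auto intro: less_imp_le\<close>)
      also have "\<dots> \<le> (\<Sum>i. (cmod (a (i + k)))^2 * g (i + k) x) * M"
      proof (intro mult_right_mono sum_le_suminf)
        fix i show "0 \<le> (cmod (a (i + k)))^2 * g (i + k) x" using g0(1)[of "i+k" x] by simp
      qed (use M0 Psum in auto)
      finally show "(cmod (\<Sum>i<n. a (i + k) * complex_of_real (g (i + k) x)))^2 \<le> (\<Sum>i. (cmod (a (i + k)))^2 * g (i + k) x) * M" .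
    qed
  qed
  define F where "F = poisson_sum \<alpha> xs a"
  have F_eq: "F x = (\<Sum>i. a i * complex_of_real (g i x))" for x
    unfolding F_def poisson_sum_def g_def ..
  have Fdiff: "F x - (\<Sum>i<k. a i * complex_of_real (g i x)) = (\<Sum>i. a (i + k) * complex_of_real (g (i + k) x))" for k x
    using suminf_minus_initial_segment[OF Fsum[of 0 x, simplified], of k] by (simp add: F_eq)
  have cont_part: "continuous_on UNIV (\<lambda>x. \<Sum>i<n. a i * complex_of_real (g i x))" for n
    unfolding g_def
    by (intro continuous_intros continuous_on_compose2[OF poisson_cont[OF al]]) auto
  have contF: "continuous_on UNIV F"
  proof (rule uniform_limit_theorem[OF _ _ trivial_limit_sequentially])
    show "\<forall>\<^sub>F n in sequentially. continuous_on UNIV (\<lambda>x. \<Sum>i<n. a i * complex_of_real (g i x))"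
      using cont_part by simp
    show "uniform_limit UNIV (\<lambda>n x. \<Sum>i<n. a i * complex_of_real (g i x)) F sequentially"
    proof (rule uniform_limitI)
      fix e :: real assume e: "e > 0"
      have M0: "M \<ge> 0" using M[of 0 0] by simp
      have "(\<lambda>k. G0 * M * T k) \<longlonglongrightarrow> G0 * M * 0" by (intro tendsto_mult_left Tlim)
      hence "\<forall>\<^sub>F k in sequentially. G0 * M * T k < e^2"
        using e by (intro order_tendstoD) auto
      thus "\<forall>\<^sub>F n in sequentially. \<forall>x\<in>UNIV. dist (\<Sum>i<n. a i * complex_of_real (g i x)) (F x) < e"
      proof eventually_elim
        case (elim k)
        show ?case
        proof
          fix x :: "real^2"
          have "(dist (\<Sum>i<k. a i * complex_of_real (g i x)) (F x))^2 = (cmod (\<Sum>i. a (i + k) * complex_of_real (g (i + k) x)))^2"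
            by (simp add: dist_norm norm_minus_commute Fdiff)
          also have "\<dots> \<le> (\<Sum>i. (cmod (a (i + k)))^2 * g (i + k) x) * M" by (rule tailCS)
          also have "\<dots> \<le> G0 * T k * M" using PT[of k x] M0 by (rule mult_right_mono)
          also have "\<dots> < e^2" using elim by (simp add: mult_ac)
          finally show "dist (\<Sum>i<k. a i * complex_of_real (g i x)) (F x) < e"
            using e by (simp add: power_less_imp_less_base)
        qed
      qed
    qed
  qed
  have measF: "F \<in> borel_measurable lborel"
    using borel_measurable_continuous_onI[OF contF] by simp
  define P where "P = (\<lambda>x. \<Sum>i. (cmod (a i))^2 * g i x)"
  define Ip where "Ip = (LINT z|lborel. poisson \<alpha> z)"
  have intg: "integrable lborel (g j)" "(LINT x|lborel. g j x) = Ip" for j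
    unfolding g_def Ip_def using poisson_shift2[OF al] by auto
  have intP: "integrable lborel P"
    unfolding P_def
  proof (rule integrable_suminf)
    show "integrable lborel (\<lambda>x. (cmod (a i))^2 * g i x)" for i
      using intg(1) by (rule integrable_mult_right)
    show "AE x in lborel. summable (\<lambda>i. norm ((cmod (a i))^2 * g i x))"
    proof (rule AE_I2)
      fix x
      have "(\<lambda>i. norm ((cmod (a i))^2 * g i x)) = (\<lambda>i. (cmod (a i))^2 * g i x)"
        using g0 by (intro ext) (simp add: abs_mult abs_of_pos)
      thus "summable (\<lambda>i. norm ((cmod (a i))^2 * g i x))" using Psum[of 0 x] by simp
    qed
    have "(LINT x|lborel. norm ((cmod (a i))^2 * g i x)) = (cmod (a i))^2 * Ip" for i
    proof -
      have "(LINT x|lborel. norm ((cmod (a i))^2 * g i x)) = (LINT x|lborel. (cmod (a i))^2 * g i x)"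
        using g0 by (intro Bochner_Integration.integral_cong) (auto simp: abs_of_pos less_imp_le)
      thus ?thesis using intg[of i] by simp
    qed
    thus "summable (\<lambda>i. LINT x|lborel. norm ((cmod (a i))^2 * g i x))"
      using asum by (simp add: summable_mult2)
  qed
  have Fbound: "(cmod (F x))^2 \<le> M * P x" for x
    using tailCS[of 0 x] by (simp add: F_eq P_def mult.commute)
  have "integrable lborel (\<lambda>x. (cmod (F x))^2)"
  proof (rule Bochner_Integration.integrable_bound[OF integrable_mult_right[OF intP, of M]])
    show "(\<lambda>x. (cmod (F x))^2) \<in> borel_measurable lborel" using measF by measurable
    show "AE x in lborel. norm ((cmod (F x))^2) \<le> norm (M * P x)"
      using Fbound by (auto intro!: AE_I2 order_trans[OF _ abs_ge_self])
  qed
  hence "sq_int F" unfolding sq_int_def using measF by simp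
  thus ?thesis using contF by (simp add: F_def)
qed

end
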